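(* Let $\{\rho_n\}_{n\ge0},\{\beta_n\}_{n\ge0},\{\tau_n\}_{n\ge0}$ be complex sequences with $\rho_n\ne0$, $\tau_n\neq0$ for $n\ge0$, $\beta_0\neq0,\pm1$, $\beta_n\neq0$ for $n\ge1$. Let $\mathcal{P}_0(\lambda)=1$, $\mathcal{P}_1(\lambda)=\rho_0(\lambda-\beta_0)$ and $\mathcal{P}_{n+1}(\lambda)=\rho_n(\lambda-\beta_n)\mathcal{P}_n(\lambda)+\tau_n\lambda\,\mathcal{P}_{n-1}(\lambda)$ for $n\ge1$. Let $\{\alpha_n\}_{n\ge0}$ be nonzero real numbers with $\alpha_0=\tau_0\rho_0^{-1}$, $\alpha_1\neq\rho_0\beta_0$ and $$\alpha_n=-(\rho_{n-1}-\alpha_{n-1}^{-1}\tau_{n-1})+\rho_{n-1}\beta_{n-1},\quad n\ge2,$$ and put $\mathcal{Q}_0(\lambda)=1$, $\mathcal{Q}_n(\lambda)=\mathcal{P}_n(\lambda)+\alpha_n\mathcal{P}_{n-1}(\lambda)$, $n\ge1$. With $p_n=\alpha_{n-1}\rho_{n-1}-\tau_{n-1}$ and $q_n=\alpha_{n-1}(\alpha_n-\rho_{n-1}\beta_{n-1})$, assume $p_{n+1}\neq0$ and $q_n\neq0$ for all $n\ge1$. Suppose $\mathcal{Q}_1(1)=0$. Then $\mathcal{Q}_n(\lambda)$ has a common zero at $\lambda=1$ for all $n\ge2$, with $\mathcal{Q}_2(\lambda)$ having a double zero at $\lambda=1$ if $\alpha_1\,(\neq\rho_0\beta_0)$ is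 a root of the quadratic equation $\rho_1x^2-\rho_0\beta_0\tau_1=0$. However, if $\mathcal{Q}_2(\lambda)$ does not have a double zero at $\lambda=1$, then for every $n\ge2$, $\mathcal{Q}_n(\lambda)$ and $\mathcal{Q}_{n-1}(\lambda)$ have no common zero except at $\lambda=1$.
   Context: Standing assumptions of the paper in this setting: $p_{n+1}\neq0$, $q_n\neq0$ for $n\ge1$. *)

theory Defs
  imports "HOL-Computational_Algebra.Polynomial"
begin

fun PP :: "(nat \<Rightarrow> complex) \<Rightarrow> (nat \<Rightarrow> complex) \<Rightarrow> (nat \<Rightarrow> complex) \<Rightarrow> nat \<Rightarrow> complex poly" where
  "PP \<rho> \<beta> \<tau> 0 = 1"
| "PP \<rho> \<beta> \<tau> (Suc 0) = smult (\<rho> 0) [:- \<beta> 0, 1:]"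
| "PP \<rho> \<beta> \<tau> (Suc (Suc n)) =
     smult (\<rho> (Suc n)) [:- \<beta> (Suc n), 1:] * PP \<rho> \<beta> \<tau> (Suc n)
     + smult (\<tau> (Suc n)) [:0, 1:] * PP \<rho> \<beta> \<tau> n"

definition QQ :: "(nat \<Rightarrow> complex) \<Rightarrow> (nat \<Rightarrow> complex) \<Rightarrow> (nat \<Rightarrow> complex) \<Rightarrow> (nat \<Rightarrow> real) \<Rightarrow> nat \<Rightarrow> complex poly" where
  "QQ \<rho> \<beta> \<tau> \<alpha> n = (if n = 0 then 1
     else PP \<rho> \<beta> \<tau> n + smult (complex_of_real (\<alpha> n)) (PP \<rho> \<beta> \<tau> (n - 1)))"

definition pp :: "(nat \<Rightarrow> complex) \<Rightarrow> (nat \<Rightarrow> complex) \<Rightarrow> (nat \<Rightarrow> real) \<Rightarrow> nat \<Rightarrow> complex" where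
  "pp \<rho> \<tau> \<alpha> n = complex_of_real (\<alpha> (n - 1)) * \<rho> (n - 1) - \<tau> (n - 1)"

definition qq :: "(nat \<Rightarrow> complex) \<Rightarrow> (nat \<Rightarrow> complex) \<Rightarrow> (nat \<Rightarrow> real) \<Rightarrow> nat \<Rightarrow> complex" where
  "qq \<rho> \<beta> \<alpha> n = complex_of_real (\<alpha> (n - 1)) *
     (complex_of_real (\<alpha> n) - \<rho> (n - 1) * \<beta> (n - 1))"

end

theory Submission
  imports Defs
begin

lemma PP0_nz:
  assumes "\<And>n. \<rho> n \<noteq> 0" "\<beta> 0 \<noteq> 0" "\<And>n. n \<ge> 1 \<Longrightarrow> \<beta> n \<noteq> 0"
  shows "poly (PP \<rho> \<beta> \<tau> n) 0 \<noteq> 0"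
  using assms by (induction \<rho> \<beta> \<tau> n rule: PP.induct) auto

lemma PP_nocommon:
  assumes "\<And>n. \<rho> n \<noteq> 0" "\<beta> 0 \<noteq> 0" "\<And>n. n \<ge> 1 \<Longrightarrow> \<beta> n \<noteq> 0" "\<And>n. \<tau> n \<noteq> 0"
  shows "\<not> (poly (PP \<rho> \<beta> \<tau> (Suc k)) z = 0 \<and> poly (PP \<rho> \<beta> \<tau> k) z = 0)"
proof (induction k)
  case 0
  then show ?case by simp
next
  case (Suc k)
  show ?case
  proof
    assume h: "poly (PP \<rho> \<beta> \<tau> (Suc (Suc k))) z = 0 \<and> poly (PP \<rho> \<beta> \<tau> (Suc k)) z = 0"
    have "poly (PP \<rho> \<beta> \<tau> (Suc (Suc k))) z = \<rho> (Suc k) * (z - \<beta> (Suc k)) * poly (PP \<rho> \<beta> \<tau> (Suc k)) z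
       + \<tau> (Suc k) * z * poly (PP \<rho> \<beta> \<tau> k) z" by (simp add: algebra_simps)
    moreover have hk: "poly (PP \<rho> \<beta> \<tau> (Suc k)) z = 0" using h by simp
    ultimately have "\<tau> (Suc k) * z * poly (PP \<rho> \<beta> \<tau> k) z = 0" using h
      by (metis add_0 mult_zero_right)
    moreover have "z \<noteq> 0" using h PP0_nz[where \<rho>=\<rho> and \<beta>=\<beta> and \<tau>=\<tau> and n="Suc k", OF assms(1-3)] by blast
    ultimately have "poly (PP \<rho> \<beta> \<tau> k) z = 0" using assms(4) by simp
    with h Suc.IH show False by blast
  qed
qed

lemma Qrec:
  assumes "m \<ge> 1" and anz: "complex_of_real (\<alpha> m) \<noteq> 0"
    and rec: "complex_of_real (\<alpha> (Suc m)) =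
        - (\<rho> m - inverse (complex_of_real (\<alpha> m)) * \<tau> m) + \<rho> m * \<beta> m"
  shows "poly (QQ \<rho> \<beta> \<tau> \<alpha> (Suc m)) z =
     (\<rho> m * (z - 1) + \<tau> m / complex_of_real (\<alpha> m)) * poly (PP \<rho> \<beta> \<tau> m) z
     + \<tau> m * z * poly (PP \<rho> \<beta> \<tau> (m - 1)) z"
proof -
  obtain k where k: "m = Suc k" using assms(1) by (cases m) auto
  have "poly (QQ \<rho> \<beta> \<tau> \<alpha> (Suc m)) z = \<rho> m * (z - \<beta> m) * poly (PP \<rho> \<beta> \<tau> m) z
     + \<tau> m * z * poly (PP \<rho> \<beta> \<tau> (m - 1)) z + complex_of_real (\<alpha> (Suc m)) * poly (PP \<rho> \<beta> \<tau> m) z"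
    unfolding k QQ_def by (simp add: algebra_simps)
  also have "\<dots> = (\<rho> m * (z - 1) + \<tau> m / complex_of_real (\<alpha> m)) * poly (PP \<rho> \<beta> \<tau> m) z
     + \<tau> m * z * poly (PP \<rho> \<beta> \<tau> (m - 1)) z"
    unfolding rec by (simp add: algebra_simps divide_inverse)
  finally show ?thesis .
qed

theorem mainTheorem3:
  fixes \<rho> \<beta> \<tau> :: "nat \<Rightarrow> complex" and \<alpha> :: "nat \<Rightarrow> real"
  assumes rho_nz: "\<And>n. \<rho> n \<noteq> 0"
    and tau_nz: "\<And>n. \<tau> n \<noteq> 0"
    and beta0: "\<beta> 0 \<noteq> 0" "\<beta> 0 \<noteq> 1" "\<beta> 0 \<noteq> -1"
    and beta_nz: "\<And>n. n \<ge> 1 \<Longrightarrow> \<beta> n \<noteq> 0"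
    and alpha_nz: "\<And>n. \<alpha> n \<noteq> 0"
    and alpha0: "complex_of_real (\<alpha> 0) = \<tau> 0 / \<rho> 0"
    and alpha1: "complex_of_real (\<alpha> 1) \<noteq> \<rho> 0 * \<beta> 0"
    and alpha_rec: "\<And>n. n \<ge> 2 \<Longrightarrow> complex_of_real (\<alpha> n) =
        - (\<rho> (n - 1) - inverse (complex_of_real (\<alpha> (n - 1))) * \<tau> (n - 1)) + \<rho> (n - 1) * \<beta> (n - 1)"
    and p_nz: "\<And>n. n \<ge> 1 \<Longrightarrow> pp \<rho> \<tau> \<alpha> (n + 1) \<noteq> 0"
    and q_nz: "\<And>n. n \<ge> 1 \<Longrightarrow> qq \<rho> \<beta> \<alpha> n \<noteq> 0"
    and Q1: "poly (QQ \<rho> \<beta> \<tau> \<alpha> 1) 1 = 0"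
  shows "(\<forall>n\<ge>2. poly (QQ \<rho> \<beta> \<tau> \<alpha> n) 1 = 0)
    \<and> (\<rho> 1 * (complex_of_real (\<alpha> 1))\<^sup>2 - \<rho> 0 * \<beta> 0 * \<tau> 1 = 0
         \<longrightarrow> order 1 (QQ \<rho> \<beta> \<tau> \<alpha> 2) = 2)
    \<and> (order 1 (QQ \<rho> \<beta> \<tau> \<alpha> 2) \<noteq> 2
         \<longrightarrow> (\<forall>n\<ge>2. \<forall>z. poly (QQ \<rho> \<beta> \<tau> \<alpha> n) z = 0 \<and> poly (QQ \<rho> \<beta> \<tau> \<alpha> (n - 1)) z = 0
                 \<longrightarrow> z = 1))"
proof -
  define a where "a = (\<lambda>n. complex_of_real (\<alpha> n))"
  have anz: "a n \<noteq> 0" for n using alpha_nz by (simp add: a_def)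
  have recm: "complex_of_real (\<alpha> (Suc m)) =
        - (\<rho> m - inverse (complex_of_real (\<alpha> m)) * \<tau> m) + \<rho> m * \<beta> m" if "m \<ge> 1" for m
    using alpha_rec[of "Suc m"] that by simp
  have QR: "poly (QQ \<rho> \<beta> \<tau> \<alpha> (Suc m)) z =
     (\<rho> m * (z - 1) + \<tau> m / a m) * poly (PP \<rho> \<beta> \<tau> m) z
     + \<tau> m * z * poly (PP \<rho> \<beta> \<tau> (m - 1)) z" if "m \<ge> 1" for m z
    using Qrec[where m=m and \<alpha>=\<alpha> and \<rho>=\<rho> and \<tau>=\<tau> and \<beta>=\<beta> and z=z, OF that _ recm[OF that]] anz unfolding a_def by simp
  have Qm: "poly (QQ \<rho> \<beta> \<tau> \<alpha> m) z = poly (PP \<rho> \<beta> \<tau> m) z + a m * poly (PP \<rho> \<beta> \<tau> (m - 1)) z"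
    if "m \<ge> 1" for m z using that by (simp add: QQ_def a_def)
  have step1: "poly (QQ \<rho> \<beta> \<tau> \<alpha> (Suc m)) 1 = \<tau> m / a m * poly (QQ \<rho> \<beta> \<tau> \<alpha> m) 1"
    if "m \<ge> 1" for m
    using QR[OF that, of 1] Qm[OF that, of 1] anz[of m] by (simp add: field_simps)
  have part1: "poly (QQ \<rho> \<beta> \<tau> \<alpha> n) 1 = 0" if "n \<ge> 1" for n
    using that
  proof (induction n rule: dec_induct)
    case base then show ?case using Q1 .
  next
    case (step n) then show ?case using step1[of n] by simp
  qed
  have part3: "z = 1" if "n \<ge> 2" "poly (QQ \<rho> \<beta> \<tau> \<alpha> n) z = 0" "poly (QQ \<rho> \<beta> \<tau> \<alpha> (n - 1)) z = 0" for n z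
  proof (rule ccontr)
    assume z1: "z \<noteq> 1"
    define m where "m = n - 1"
    have m: "n = Suc m" "m \<ge> 1" using that(1) by (auto simp: m_def)
    have e1: "poly (PP \<rho> \<beta> \<tau> m) z = - a m * poly (PP \<rho> \<beta> \<tau> (m - 1)) z"
      using Qm[OF m(2), of z] that(3) m by (simp add: eq_neg_iff_add_eq_0)
    have e2: "(\<rho> m * (z - 1) + \<tau> m / a m) * poly (PP \<rho> \<beta> \<tau> m) z
     + \<tau> m * z * poly (PP \<rho> \<beta> \<tau> (m - 1)) z = 0" using QR[OF m(2), of z] that(2) m by simp
    have "a m * ((z - 1) * (\<tau> m - a m * \<rho> m) * poly (PP \<rho> \<beta> \<tau> (m - 1)) z) = 0"
      using e2 unfolding e1 using anz[of m] by (simp add: field_simps)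
    then have "(z - 1) * (\<tau> m - a m * \<rho> m) * poly (PP \<rho> \<beta> \<tau> (m - 1)) z = 0"
      using anz[of m] by simp
    moreover have "\<tau> m - a m * \<rho> m \<noteq> 0" using p_nz[OF m(2)] by (auto simp: pp_def a_def)
    ultimately have "poly (PP \<rho> \<beta> \<tau> (m - 1)) z = 0" using z1 by simp
    moreover then have "poly (PP \<rho> \<beta> \<tau> (Suc (m - 1))) z = 0" using e1 m(2) by simp
    ultimately show False using PP_nocommon[where \<rho>=\<rho> and \<beta>=\<beta> and \<tau>=\<tau> and k="m - 1" and z=z, OF rho_nz beta0(1) beta_nz tau_nz] by blast
  qed
  have part2: "order 1 (QQ \<rho> \<beta> \<tau> \<alpha> 2) = 2"
    if cond: "\<rho> 1 * (a 1)\<^sup>2 - \<rho> 0 * \<beta> 0 * \<tau> 1 = 0"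
  proof -
    have a1: "a 1 = \<rho> 0 * (\<beta> 0 - 1)" using Q1 by (simp add: QQ_def a_def algebra_simps)
    have a2: "a 2 = - (\<rho> 1 - inverse (a 1) * \<tau> 1) + \<rho> 1 * \<beta> 1"
      using alpha_rec[of 2] by (simp add: a_def)
    have "poly (QQ \<rho> \<beta> \<tau> \<alpha> 2) x = poly (smult (\<rho> 1 * \<rho> 0) ([:-1,1:]^2)) x" for x
    proof -
      have "poly (QQ \<rho> \<beta> \<tau> \<alpha> 2) x = \<rho> 1 * (x - \<beta> 1) * (\<rho> 0 * (x - \<beta> 0)) + \<tau> 1 * x
            + a 2 * (\<rho> 0 * (x - \<beta> 0))"
        by (simp add: QQ_def a_def numeral_2_eq_2 algebra_simps)
      also have "\<dots> = \<rho> 0 * (x - \<beta> 0) * (\<rho> 1 * (x - 1) + \<tau> 1 / a 1) + \<tau> 1 * x"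
        unfolding a2 by (simp add: algebra_simps divide_inverse)
      also have "\<dots> = \<rho> 1 * \<rho> 0 * (x - 1)^2 + (x - 1) * (\<rho> 0 * \<beta> 0 * \<tau> 1 - \<rho> 1 * (a 1)\<^sup>2) / a 1"
        using anz[of 1] unfolding a1 by (simp add: field_simps power2_eq_square)
      also have "\<dots> = \<rho> 1 * \<rho> 0 * (x - 1)^2" using cond by simp
      finally show ?thesis by simp
    qed
    then have "QQ \<rho> \<beta> \<tau> \<alpha> 2 = smult (\<rho> 1 * \<rho> 0) ([:-1,1:]^2)"
      using poly_eq_poly_eq_iff by blast
    then show ?thesis using rho_nz[of 0] rho_nz[of 1]
      by (simp add: order_smult order_power_n_n)
  qed
  show ?thesis using part1 part2 part3 unfolding a_def by auto
qed

end
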